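(* Let $T_1,T_2$ be equidistant trees with leaf set $X$ such that the tree topology of $T_1$ and the tree topology of $T_2$ differ by exactly one nearest neighbor interchange (NNI) move. Then every tree on the tropical line segment $\Gamma_{T_1,T_2}$ has the same tree topology as $T_1$ or as $T_2$, possibly with some branch lengths equal to $0$.
   Context: Max-plus arithmetic: $a\oplus b=\max\{a,b\}$, $a\odot b=a+b$; vectors in $\mathbb R^e$, $e=\binom{|X|}2$, coordinates indexed by pairs of leaves, considered modulo $\mathbb R\mathbf 1$. An equidistant tree is a rooted phylogenetic tree on leaf set $X$ with nonnegative edge lengths and all root-to-leaf distances equal; its ultrametric is its vector of pairwise leaf distances and determines the tree uniquely. $\Gamma_{T_1,T_2}$ is the set of trees whose ultrametrics are $a\odot u\oplus b\odot v$ ($a,b\in\mathbb R$), where $u,v$ are the ultrametrics of $T_1,T_2$. A clade is the set of leaves descending from a vertex. Two rooted tree topologies differ by one NNI move if there are pairwise disjoint nonempty leaf sets $X_1,X_2,X_3\subseteq X$ such that $X_1\cup X_2\cup X_3$ and each $X_i$ are clades in both trees, the two trees agree on the topology of each clade $X_i$ and on the topology outside the clade $X_1\cup X_2\cup X_3$, and inside the clade $X_1\cup X_2\cup X_3$ one tree has the form $((X_1,X_3),X_2)$ while the other has the form $((X_1,X_2),X_3)$ or $(X_1,(X_2,X_3))$ (i.e., the two trees group different pairs among $X_1,X_2,X_3$ into a clade). "Same tree topology with possible $0$ branch lengths" means the topology is that of $T_1$ or $T_2$ with some edges possibly having length zero (i.e., contracted). *)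

theory Defs
  imports Complex_Main
begin

text \<open>A rooted phylogenetic tree topology on the finite leaf set X is encoded by its
set of clades (a hierarchy): X itself (the root), all singletons (the leaves), and
nonempty subsets of X that are pairwise nested or disjoint.\<close>

definition hierarchy :: "'a set \<Rightarrow> 'a set set \<Rightarrow> bool" where
  "hierarchy X H \<longleftrightarrow> finite X \<and> X \<noteq> {} \<and> X \<in> H \<and> (\<forall>x\<in>X. {x} \<in> H) \<and>
     (\<forall>C\<in>H. C \<noteq> {} \<and> C \<subseteq> X) \<and>
     (\<forall>A\<in>H. \<forall>B\<in>H. A \<subseteq> B \<or> B \<subseteq> A \<or> A \<inter> B = {})"

text \<open>Edge lengths: l C is the length of the edge entering the (non-root) clade C.\<close>

definition root_dist :: "'a set \<Rightarrow> 'a set set \<Rightarrow> ('a set \<Rightarrow> real) \<Rightarrow> 'a \<Rightarrow> real" where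
  "root_dist X H l x = (\<Sum>C\<in>{C\<in>H. C \<noteq> X \<and> x \<in> C}. l C)"

definition tree_dist :: "'a set \<Rightarrow> 'a set set \<Rightarrow> ('a set \<Rightarrow> real) \<Rightarrow> 'a \<Rightarrow> 'a \<Rightarrow> real" where
  "tree_dist X H l x y = (\<Sum>C\<in>{C\<in>H. C \<noteq> X \<and> (x \<in> C) \<noteq> (y \<in> C)}. l C)"

definition equidistant_tree :: "'a set \<Rightarrow> 'a set set \<Rightarrow> ('a set \<Rightarrow> real) \<Rightarrow> bool" where
  "equidistant_tree X H l \<longleftrightarrow> hierarchy X H \<and> (\<forall>C\<in>H. C \<noteq> X \<longrightarrow> 0 \<le> l C) \<and>
     (\<forall>x\<in>X. \<forall>y\<in>X. root_dist X H l x = root_dist X H l y)"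

definition same_ultrametric ::
  "'a set \<Rightarrow> 'a set set \<Rightarrow> ('a set \<Rightarrow> real) \<Rightarrow> 'a set set \<Rightarrow> ('a set \<Rightarrow> real) \<Rightarrow> bool" where
  "same_ultrametric X H l H' l' \<longleftrightarrow>
     (\<forall>x\<in>X. \<forall>y\<in>X. x \<noteq> y \<longrightarrow> tree_dist X H l x y = tree_dist X H' l' x y)"

text \<open>Tree (H,l) lies on the tropical line segment Gamma through (H1,l1),(H2,l2):
its ultrametric is (a \<odot> u) \<oplus> (b \<odot> v) for some reals a b (the free shifts a, b
absorb the quotient by R*1).\<close>

definition on_tropical_segment ::
  "'a set \<Rightarrow> 'a set set \<Rightarrow> ('a set \<Rightarrow> real) \<Rightarrow> 'a set set \<Rightarrow> ('a set \<Rightarrow> real)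
     \<Rightarrow> 'a set set \<Rightarrow> ('a set \<Rightarrow> real) \<Rightarrow> bool" where
  "on_tropical_segment X H1 l1 H2 l2 H l \<longleftrightarrow> equidistant_tree X H l \<and>
     (\<exists>a b::real. \<forall>x\<in>X. \<forall>y\<in>X. x \<noteq> y \<longrightarrow>
        tree_dist X H l x y = max (a + tree_dist X H1 l1 x y) (b + tree_dist X H2 l2 x y))"

definition nni :: "'a set \<Rightarrow> 'a set set \<Rightarrow> 'a set set \<Rightarrow> bool" where
  "nni X H1 H2 \<longleftrightarrow> (\<exists>X1 X2 X3.
     X1 \<noteq> {} \<and> X2 \<noteq> {} \<and> X3 \<noteq> {} \<and>
     X1 \<inter> X2 = {} \<and> X1 \<inter> X3 = {} \<and> X2 \<inter> X3 = {} \<and>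
     (let Y = X1 \<union> X2 \<union> X3 in
       Y \<in> H1 \<and> Y \<in> H2 \<and> X1 \<in> H1 \<and> X1 \<in> H2 \<and> X2 \<in> H1 \<and> X2 \<in> H2 \<and>
       X3 \<in> H1 \<and> X3 \<in> H2 \<and>
       (\<forall>i\<in>{X1, X2, X3}. {C\<in>H1. C \<subseteq> i} = {C\<in>H2. C \<subseteq> i}) \<and>
       {C\<in>H1. \<not> C \<subseteq> Y} = {C\<in>H2. \<not> C \<subseteq> Y} \<and>
       {C\<in>H1. C \<subseteq> Y} = {Y, X1 \<union> X3} \<union> {C\<in>H1. C \<subseteq> X1 \<or> C \<subseteq> X2 \<or> C \<subseteq> X3} \<and>
       ({C\<in>H2. C \<subseteq> Y} = {Y, X1 \<union> X2} \<union> {C\<in>H2. C \<subseteq> X1 \<or> C \<subseteq> X2 \<or> C \<subseteq> X3} \<or>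
        {C\<in>H2. C \<subseteq> Y} = {Y, X2 \<union> X3} \<union> {C\<in>H2. C \<subseteq> X1 \<or> C \<subseteq> X2 \<or> C \<subseteq> X3})))"

end

theory Submission
  imports Defs
begin


definition sh :: "'a set \<Rightarrow> 'a set set \<Rightarrow> ('a set \<Rightarrow> real) \<Rightarrow> 'a \<Rightarrow> 'a \<Rightarrow> real" where
  "sh X H l x y = (\<Sum>C\<in>{C\<in>H. C \<noteq> X \<and> x \<in> C \<and> y \<in> C}. l C)"

definition splits_at :: "'a set set \<Rightarrow> 'a set \<Rightarrow> 'a \<Rightarrow> 'a \<Rightarrow> bool" where
  "splits_at G K x y \<longleftrightarrow> \<not> (\<exists>C\<in>G. C \<subset> K \<and> x \<in> C \<and> y \<in> C)"

lemma hier_finite: "hierarchy X H \<Longrightarrow> finite H"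
  unfolding hierarchy_def by (meson PowI finite_Pow_iff finite_subset subsetI)

lemma hier_nest: "hierarchy X H \<Longrightarrow> A \<in> H \<Longrightarrow> B \<in> H \<Longrightarrow> A \<subseteq> B \<or> B \<subseteq> A \<or> A \<inter> B = {}"
  unfolding hierarchy_def by blast

lemma hier_sub: "hierarchy X H \<Longrightarrow> A \<in> H \<Longrightarrow> A \<subseteq> X"
  unfolding hierarchy_def by blast

lemma hier_ne: "hierarchy X H \<Longrightarrow> A \<in> H \<Longrightarrow> A \<noteq> {}"
  unfolding hierarchy_def by blast

lemma hier_sing: "hierarchy X H \<Longrightarrow> x \<in> X \<Longrightarrow> {x} \<in> H"
  unfolding hierarchy_def by blast

lemma hier_top: "hierarchy X H \<Longrightarrow> X \<in> H"
  unfolding hierarchy_def by blast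

lemma hier_finX: "hierarchy X H \<Longrightarrow> finite X"
  unfolding hierarchy_def by blast

lemma td_formula:
  assumes "finite H"
  shows "tree_dist X H l x y = root_dist X H l x + root_dist X H l y - 2 * sh X H l x y"
proof -
  let ?Sx = "{C\<in>H. C \<noteq> X \<and> x \<in> C}"
  let ?Sy = "{C\<in>H. C \<noteq> X \<and> y \<in> C}"
  let ?Sxy = "{C\<in>H. C \<noteq> X \<and> x \<in> C \<and> y \<in> C}"
  have fx: "finite ?Sx" "finite ?Sy" using assms by auto
  have eq: "{C\<in>H. C \<noteq> X \<and> (x \<in> C) \<noteq> (y \<in> C)} = (?Sx - ?Sxy) \<union> (?Sy - ?Sxy)" by auto
  have "tree_dist X H l x y = sum l (?Sx - ?Sxy) + sum l (?Sy - ?Sxy)"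
    unfolding tree_dist_def eq by (rule sum.union_disjoint) (use fx in auto)
  also have "sum l (?Sx - ?Sxy) = sum l ?Sx - sum l ?Sxy" by (rule sum_diff) (use fx in auto)
  also have "sum l (?Sy - ?Sxy) = sum l ?Sy - sum l ?Sxy" by (rule sum_diff) (use fx in auto)
  finally show ?thesis unfolding root_dist_def sh_def by simp
qed

lemma td_sym: "tree_dist X H l x y = tree_dist X H l y x"
  unfolding tree_dist_def by metis

lemma td_refl: "tree_dist X H l x x = 0"
  unfolding tree_dist_def by simp

lemma td_nonneg: "equidistant_tree X H l \<Longrightarrow> 0 \<le> tree_dist X H l x y"
  unfolding tree_dist_def equidistant_tree_def by (auto intro: sum_nonneg)

lemma sh_mono:
  assumes "equidistant_tree X H l"
    and "\<And>C. C \<in> H \<Longrightarrow> C \<noteq> X \<Longrightarrow> x \<in> C \<Longrightarrow> y \<in> C \<Longrightarrow> p \<in> C \<and> q \<in> C"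
  shows "sh X H l x y \<le> sh X H l p q"
proof -
  have f: "finite H" using assms(1) hier_finite unfolding equidistant_tree_def by blast
  show ?thesis unfolding sh_def
    by (rule sum_mono2) (use f assms in \<open>auto simp: equidistant_tree_def\<close>)
qed

lemma td_le_of_sh:
  assumes "equidistant_tree X H l" "x \<in> X" "y \<in> X" "p \<in> X" "q \<in> X"
    and "sh X H l x y \<le> sh X H l p q"
  shows "tree_dist X H l p q \<le> tree_dist X H l x y"
proof -
  have f: "finite H" using assms(1) hier_finite unfolding equidistant_tree_def by blast
  have r: "root_dist X H l p = root_dist X H l x" "root_dist X H l q = root_dist X H l x"
     "root_dist X H l y = root_dist X H l x"
    using assms unfolding equidistant_tree_def by metis+
  show ?thesis using assms(6) unfolding td_formula[OF f] r by simp
qed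

lemma Qtree:
  assumes eq: "equidistant_tree X G l" and K: "K \<in> G" and pts: "x \<in> K" "y \<in> K" "p \<in> K" "q \<in> K"
    and sp: "splits_at G K x y"
  shows "tree_dist X G l p q \<le> tree_dist X G l x y"
proof -
  have h: "hierarchy X G" using eq unfolding equidistant_tree_def by blast
  have KX: "K \<subseteq> X" using hier_sub[OF h K] .
  show ?thesis
  proof (rule td_le_of_sh[OF eq])
    show "sh X G l x y \<le> sh X G l p q"
    proof (rule sh_mono[OF eq])
      fix C assume C: "C \<in> G" "C \<noteq> X" "x \<in> C" "y \<in> C"
      have "C \<subseteq> K \<or> K \<subseteq> C \<or> C \<inter> K = {}" using hier_nest[OF h C(1) K] .
      moreover have "\<not> C \<subset> K" using sp C unfolding splits_at_def by blast
      ultimately have "K \<subseteq> C" using C pts by blast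
      then show "p \<in> C \<and> q \<in> C" using pts by blast
    qed
  qed (use pts KX in auto)
qed

lemma ultra:
  assumes eq: "equidistant_tree X H l" and pts: "p \<in> X" "q \<in> X" "r \<in> X"
  shows "tree_dist X H l p q \<le> max (tree_dist X H l p r) (tree_dist X H l r q)"
proof -
  have h: "hierarchy X H" using eq unfolding equidistant_tree_def by blast
  let ?S = "\<lambda>x y. {C\<in>H. C \<noteq> X \<and> x \<in> C \<and> y \<in> C}"
  have "?S p r \<subseteq> ?S r q \<or> ?S r q \<subseteq> ?S p r"
  proof (rule ccontr)
    assume "\<not> ?thesis"
    then obtain C D where C: "C \<in> H" "p \<in> C" "r \<in> C" "q \<notin> C" and D: "D \<in> H" "r \<in> D" "q \<in> D" "p \<notin> D"
      by blast
    show False using hier_nest[OF h C(1) D(1)] C D by blast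
  qed
  then show ?thesis
  proof
    assume s: "?S p r \<subseteq> ?S r q"
    have "sh X H l p r \<le> sh X H l p q" by (rule sh_mono[OF eq]) (use s in blast)
    then have "tree_dist X H l p q \<le> tree_dist X H l p r" by (rule td_le_of_sh[OF eq pts(1) pts(3) pts(1) pts(2)])
    then show ?thesis by simp
  next
    assume s: "?S r q \<subseteq> ?S p r"
    have "sh X H l r q \<le> sh X H l p q" by (rule sh_mono[OF eq]) (use s in blast)
    then have "tree_dist X H l p q \<le> tree_dist X H l r q" by (rule td_le_of_sh[OF eq pts(3) pts(2) pts(1) pts(2)])
    then show ?thesis by simp
  qed
qed

lemma td_const:
  assumes eq: "equidistant_tree X G l" and AB: "A \<in> G" "B \<in> G" "A \<inter> B = {}"
    and pts: "a \<in> A" "a' \<in> A" "b \<in> B" "b' \<in> B"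
  shows "tree_dist X G l a b = tree_dist X G l a' b'"
proof -
  have h: "hierarchy X G" using eq unfolding equidistant_tree_def by blast
  have char: "\<And>x y. x \<in> A \<Longrightarrow> y \<in> B \<Longrightarrow>
     {C\<in>G. C \<noteq> X \<and> x \<in> C \<and> y \<in> C} = {C\<in>G. C \<noteq> X \<and> A \<subseteq> C \<and> B \<subseteq> C}"
  proof -
    fix x y assume xy: "x \<in> A" "y \<in> B"
    show "{C\<in>G. C \<noteq> X \<and> x \<in> C \<and> y \<in> C} = {C\<in>G. C \<noteq> X \<and> A \<subseteq> C \<and> B \<subseteq> C}"
    proof (intro Collect_cong iffI conjI; (elim conjE)?)
      fix C assume C: "C \<in> G" "C \<noteq> X" "x \<in> C" "y \<in> C"
      show "A \<subseteq> C" using hier_nest[OF h C(1) AB(1)] C xy AB(3) by blast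
      show "B \<subseteq> C" using hier_nest[OF h C(1) AB(2)] C xy AB(3) by blast
    qed (use xy in auto)
  qed
  have s: "sh X G l a b = sh X G l a' b'" unfolding sh_def char[OF pts(1,3)] char[OF pts(2,4)] ..
  have AX: "A \<subseteq> X" "B \<subseteq> X" using hier_sub[OF h] AB by auto
  show ?thesis
    using td_le_of_sh[OF eq, of a b a' b'] td_le_of_sh[OF eq, of a' b' a b] s pts AX by force
qed



definition par :: "'a set set \<Rightarrow> 'a set \<Rightarrow> 'a set" where
  "par G K = (SOME P. P \<in> G \<and> K \<subset> P \<and> (\<forall>Q\<in>G. K \<subset> Q \<longrightarrow> P \<subseteq> Q))"

definition diam :: "('a \<Rightarrow> 'a \<Rightarrow> real) \<Rightarrow> 'a set \<Rightarrow> real" where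
  "diam d K = Max ((\<lambda>(p, q). d p q) ` (K \<times> K))"

lemma min_common:
  assumes h: "hierarchy X G" and S: "S \<subseteq> G" "S \<noteq> {}" "\<forall>P\<in>S. z \<in> P"
  shows "\<exists>P\<in>S. \<forall>Q\<in>S. P \<subseteq> Q"
proof -
  have "finite S" using hier_finite[OF h] S(1) finite_subset by blast
  then obtain m where m: "m \<in> S" "\<forall>b\<in>S. b \<subseteq> m \<longrightarrow> m = b"
    using finite_has_minimal[of S] S(2) by blast
  have "\<forall>Q\<in>S. m \<subseteq> Q"
  proof
    fix Q assume Q: "Q \<in> S"
    have "m \<subseteq> Q \<or> Q \<subseteq> m \<or> m \<inter> Q = {}" using hier_nest[OF h] m(1) Q S(1) by blast
    then show "m \<subseteq> Q" using m Q S(3) by blast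
  qed
  then show ?thesis using m(1) by blast
qed

lemma par_prop:
  assumes h: "hierarchy X G" and K: "K \<in> G" "K \<noteq> X"
  shows "par G K \<in> G \<and> K \<subset> par G K \<and> (\<forall>Q\<in>G. K \<subset> Q \<longrightarrow> par G K \<subseteq> Q)"
proof -
  obtain z where z: "z \<in> K" using hier_ne[OF h K(1)] by blast
  have "X \<in> {Q\<in>G. K \<subset> Q}" using hier_top[OF h] hier_sub[OF h K(1)] K(2) by blast
  then obtain P where "P \<in> {Q\<in>G. K \<subset> Q}" "\<forall>Q\<in>{Q\<in>G. K \<subset> Q}. P \<subseteq> Q"
    using min_common[OF h, of "{Q\<in>G. K \<subset> Q}" z] z by blast
  then have "\<exists>P. P \<in> G \<and> K \<subset> P \<and> (\<forall>Q\<in>G. K \<subset> Q \<longrightarrow> P \<subseteq> Q)" by blast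
  then show ?thesis unfolding par_def by (rule someI_ex)
qed

lemma tele:
  fixes g :: "'a set \<Rightarrow> real"
  assumes h: "hierarchy X G"
  shows "D \<in> G \<Longrightarrow> x \<in> D \<Longrightarrow>
    (\<Sum>C\<in>{C\<in>G. x \<in> C \<and> C \<subset> D}. g (par G C) - g C) = g D - g {x}"
proof (induction D rule: measure_induct_rule[where f="\<lambda>D. card {C\<in>G. x \<in> C \<and> C \<subset> D}"])
  case (less D)
  let ?S = "\<lambda>D. {C\<in>G. x \<in> C \<and> C \<subset> D}"
  have fin: "\<And>D. finite (?S D)" using hier_finite[OF h] by auto
  have xX: "x \<in> X" using hier_sub[OF h less.prems(1)] less.prems(2) by blast
  show ?case
  proof (cases "D = {x}")
    case True
    then have "?S D = {}" by auto
    then have "(\<Sum>C\<in>?S D. g (par G C) - g C) = 0" by (simp only: sum.empty)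
    then show ?thesis using True by simp
  next
    case False
    have "{x} \<in> ?S D" using False less.prems hier_sing[OF h xX] by auto
    then have ne: "?S D \<noteq> {}" by blast
    obtain E where E: "E \<in> ?S D" "\<forall>b\<in>?S D. E \<subseteq> b \<longrightarrow> E = b"
      using finite_has_maximal[OF fin ne] by blast
    have Emax: "\<forall>C\<in>?S D. C \<subseteq> E"
    proof
      fix C assume C: "C \<in> ?S D"
      have "C \<subseteq> E \<or> E \<subseteq> C \<or> C \<inter> E = {}" using hier_nest[OF h] C E(1) by blast
      then show "C \<subseteq> E" using C E by blast
    qed
    have SD: "?S D = insert E (?S E)" using E(1) Emax by auto
    have EnS: "E \<notin> ?S E" by blast
    have EX: "E \<noteq> X" using E(1) hier_sub[OF h less.prems(1)] by blast
    have pE: "par G E = D"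
    proof -
      have pp: "par G E \<in> G" "E \<subset> par G E" "\<forall>Q\<in>G. E \<subset> Q \<longrightarrow> par G E \<subseteq> Q"
        using par_prop[OF h _ EX] E(1) by auto
      have "par G E \<subseteq> D" using pp(3) less.prems(1) E(1) by blast
      moreover have "\<not> par G E \<subset> D"
      proof
        assume "par G E \<subset> D"
        then have "par G E \<in> ?S D" using pp E(1) by blast
        then show False using Emax pp(2) by blast
      qed
      ultimately show ?thesis by blast
    qed
    have "card (?S E) < card (?S D)" unfolding SD using fin EnS by simp
    then have IH: "(\<Sum>C\<in>?S E. g (par G C) - g C) = g E - g {x}"
      using less.IH E(1) by blast
    have "(\<Sum>C\<in>?S D. g (par G C) - g C) = (g (par G E) - g E) + (\<Sum>C\<in>?S E. g (par G C) - g C)"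
      unfolding SD using fin EnS by (simp add: sum.insert)
    then show ?thesis using IH pE by simp
  qed
qed

lemma diam_ge: "finite K \<Longrightarrow> p \<in> K \<Longrightarrow> q \<in> K \<Longrightarrow> d p q \<le> diam d K"
  unfolding diam_def by (rule Max_ge) auto

lemma diam_le: "finite K \<Longrightarrow> K \<noteq> {} \<Longrightarrow> (\<And>p q. p \<in> K \<Longrightarrow> q \<in> K \<Longrightarrow> d p q \<le> c) \<Longrightarrow> diam d K \<le> c"
  unfolding diam_def by (subst Max_le_iff) auto

lemma diam_sing: "diam d {x} = d x x"
  unfolding diam_def by simp

lemma diam_mono: "finite K' \<Longrightarrow> K \<noteq> {} \<Longrightarrow> K \<subseteq> K' \<Longrightarrow> diam d K \<le> diam d K'"
  unfolding diam_def by (rule Max_mono) auto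

lemma realize:
  assumes h: "hierarchy X G" and d0: "\<And>x. d x x = 0"
    and Q: "\<And>K x y p q. K \<in> G \<Longrightarrow> x \<in> K \<Longrightarrow> y \<in> K \<Longrightarrow> p \<in> K \<Longrightarrow> q \<in> K \<Longrightarrow>
              splits_at G K x y \<Longrightarrow> d p q \<le> d x y"
  shows "\<exists>l'. equidistant_tree X G l' \<and> (\<forall>x\<in>X. \<forall>y\<in>X. x \<noteq> y \<longrightarrow> tree_dist X G l' x y = d x y)"
proof -
  define g where "g K = diam d K / 2" for K
  define l' where "l' C = g (par G C) - g C" for C
  have finX: "finite X" using hier_finX[OF h] .
  have g0: "g {x} = 0" for x unfolding g_def diam_sing d0 by simp
  have tl: "(\<Sum>C\<in>{C\<in>G. x \<in> C \<and> C \<subset> D}. l' C) = g D" if "D \<in> G" "x \<in> D" for D x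
    unfolding l'_def using tele[OF h that, of g] g0 by simp
  have rd: "root_dist X G l' x = g X" if "x \<in> X" for x
  proof -
    have "{C\<in>G. C \<noteq> X \<and> x \<in> C} = {C\<in>G. x \<in> C \<and> C \<subset> X}" using hier_sub[OF h] by blast
    then show ?thesis unfolding root_dist_def using tl[OF hier_top[OF h] that] by simp
  qed
  have nn: "0 \<le> l' C" if "C \<in> G" "C \<noteq> X" for C
  proof -
    have pp: "par G C \<in> G" "C \<subset> par G C" using par_prop[OF h that] by auto
    have "diam d C \<le> diam d (par G C)"
    proof (rule diam_mono)
      show "finite (par G C)" using pp(1) hier_sub[OF h] finX finite_subset by blast
    qed (use pp hier_ne[OF h that(1)] in auto)
    then show ?thesis unfolding l'_def g_def by simp
  qed
  have eqt: "equidistant_tree X G l'" unfolding equidistant_tree_def using h nn rd by auto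
  have td: "tree_dist X G l' x y = d x y" if xy: "x \<in> X" "y \<in> X" "x \<noteq> y" for x y
  proof -
    obtain L where L: "L \<in> {C\<in>G. x \<in> C \<and> y \<in> C}" "\<forall>C\<in>{C\<in>G. x \<in> C \<and> y \<in> C}. L \<subseteq> C"
      using min_common[OF h, of "{C\<in>G. x \<in> C \<and> y \<in> C}" x] hier_top[OF h] xy by blast
    have LX: "L \<subseteq> X" using L(1) hier_sub[OF h] by blast
    have sp: "splits_at G L x y" unfolding splits_at_def using L by blast
    have eqS: "{C\<in>G. C \<noteq> X \<and> (x \<in> C) \<noteq> (y \<in> C)} = {C\<in>G. x \<in> C \<and> C \<subset> L} \<union> {C\<in>G. y \<in> C \<and> C \<subset> L}"
    proof (intro set_eqI iffI)
      fix C assume C: "C \<in> {C\<in>G. C \<noteq> X \<and> (x \<in> C) \<noteq> (y \<in> C)}"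
      have "C \<subseteq> L \<or> L \<subseteq> C \<or> C \<inter> L = {}" using hier_nest[OF h] C L(1) by blast
      then show "C \<in> {C\<in>G. x \<in> C \<and> C \<subset> L} \<union> {C\<in>G. y \<in> C \<and> C \<subset> L}" using C L(1) by blast
    next
      fix C assume C: "C \<in> {C\<in>G. x \<in> C \<and> C \<subset> L} \<union> {C\<in>G. y \<in> C \<and> C \<subset> L}"
      then show "C \<in> {C\<in>G. C \<noteq> X \<and> (x \<in> C) \<noteq> (y \<in> C)}" using L LX by blast
    qed
    have fin: "finite {C\<in>G. x \<in> C \<and> C \<subset> L}" "finite {C\<in>G. y \<in> C \<and> C \<subset> L}"
      using hier_finite[OF h] by auto
    have "tree_dist X G l' x y = sum l' {C\<in>G. x \<in> C \<and> C \<subset> L} + sum l' {C\<in>G. y \<in> C \<and> C \<subset> L}"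
      unfolding tree_dist_def eqS by (rule sum.union_disjoint) (use fin L in auto)
    also have "\<dots> = 2 * g L" using tl L(1) by simp
    also have "\<dots> = diam d L" unfolding g_def by simp
    also have "diam d L = d x y"
    proof (rule antisym)
      show "diam d L \<le> d x y"
        by (rule diam_le) (use LX finX finite_subset L(1) Q sp in auto)
      show "d x y \<le> diam d L"
        by (rule diam_ge) (use LX finX finite_subset L(1) in auto)
    qed
    finally show ?thesis .
  qed
  show ?thesis using eqt td by blast
qed



lemma excl5:
  assumes "C' = Y \<or> C' = P1 \<or> C' \<subseteq> A \<or> C' \<subseteq> B \<or> C' \<subseteq> C" "C' \<subset> Y"
    "\<not> (x \<in> P1 \<and> y \<in> P1)" "\<not> (x \<in> A \<and> y \<in> A)" "\<not> (x \<in> B \<and> y \<in> B)" "\<not> (x \<in> C \<and> y \<in> C)"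
    "x \<in> C'" "y \<in> C'"
  shows False
  using assms by (elim disjE) blast+

lemma exclK:
  assumes "K = Y \<or> K = P \<or> K \<subseteq> A \<or> K \<subseteq> B \<or> K \<subseteq> C" "K \<noteq> Y" "K \<noteq> P" "A \<union> B \<subseteq> K"
    "A \<noteq> {}" "B \<noteq> {}" "A \<inter> B = {}" "A \<inter> C = {}" "B \<inter> C = {}"
  shows False
  using assms by (elim disjE) blast+

lemma side:
  assumes eG: "equidistant_tree X G lg" and eO: "equidistant_tree X Go lo" and eH: "equidistant_tree X H l"
  and dmax: "\<forall>x\<in>X. \<forall>y\<in>X. x \<noteq> y \<longrightarrow> tree_dist X H l x y = max (ag + tree_dist X G lg x y) (ao + tree_dist X Go lo x y)"
  and ne: "A \<noteq> {}" "B \<noteq> {}" "C \<noteq> {}" and dj: "A \<inter> B = {}" "A \<inter> C = {}" "B \<inter> C = {}"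
  and Y: "Y = A \<union> B \<union> C"
  and inG: "A \<in> G" "B \<in> G" "C \<in> G" "Y \<in> G" "A \<union> C \<in> G"
  and inO: "A \<in> Go" "B \<in> Go" "C \<in> Go" "Y \<in> Go" "A \<union> B \<in> Go"
  and strG: "\<forall>K\<in>G. K \<in> Go \<or> K = A \<union> C" and strO: "\<forall>K\<in>Go. K \<in> G \<or> K = A \<union> B"
  and subG: "\<forall>K\<in>G. K \<subseteq> Y \<longrightarrow> K = Y \<or> K = A \<union> C \<or> K \<subseteq> A \<or> K \<subseteq> B \<or> K \<subseteq> C"
  and subO: "\<forall>K\<in>Go. K \<subseteq> Y \<longrightarrow> K = Y \<or> K = A \<union> B \<or> K \<subseteq> A \<or> K \<subseteq> B \<or> K \<subseteq> C"
  and cond: "\<forall>a\<in>A. \<forall>b\<in>B. \<forall>c\<in>C. tree_dist X H l a c \<le> tree_dist X H l a b"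
  shows "\<exists>l'. equidistant_tree X G l' \<and> same_ultrametric X H l G l'"
proof -
  define d where "d = tree_dist X H l"
  have hG: "hierarchy X G" using eG unfolding equidistant_tree_def by blast
  have hO: "hierarchy X Go" using eO unfolding equidistant_tree_def by blast
  have YX: "Y \<subseteq> X" using hier_sub[OF hG inG(4)] .
  have d0: "\<And>x. d x x = 0" unfolding d_def by (rule td_refl)
  have dnn: "\<And>x y. 0 \<le> d x y" unfolding d_def by (rule td_nonneg[OF eH])
  have dsym: "\<And>x y. d x y = d y x" unfolding d_def by (rule td_sym)
  have dle: "d p q \<le> d x y"
    if "p \<in> X" "q \<in> X" "x \<in> X" "y \<in> X" "p \<noteq> q" "x \<noteq> y"
       "tree_dist X G lg p q \<le> tree_dist X G lg x y" "tree_dist X Go lo p q \<le> tree_dist X Go lo x y"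
     for p q x y
  proof -
    have e1: "d p q = max (ag + tree_dist X G lg p q) (ao + tree_dist X Go lo p q)"
      unfolding d_def using dmax that(1,2,5) by blast
    have e2: "d x y = max (ag + tree_dist X G lg x y) (ao + tree_dist X Go lo x y)"
      unfolding d_def using dmax that(3,4,6) by blast
    show ?thesis unfolding e1 e2 by (intro max.mono add_left_mono that(7,8))
  qed
  have YBC: "d p q \<le> d b c" if "b \<in> B" "c \<in> C" "p \<in> Y" "q \<in> Y" for b c p q
  proof (cases "p = q")
    case True then show ?thesis using d0 dnn by simp
  next
    case False
    have s1: "splits_at G Y b c" unfolding splits_at_def
    proof
      assume "\<exists>C'\<in>G. C' \<subset> Y \<and> b \<in> C' \<and> c \<in> C'"
      then obtain C' where C': "C' \<in> G" "C' \<subset> Y" "b \<in> C'" "c \<in> C'" by blast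
      have "C' = Y \<or> C' = A \<union> C \<or> C' \<subseteq> A \<or> C' \<subseteq> B \<or> C' \<subseteq> C" using subG C' by blast
      then show False by (rule excl5[where x=b and y=c]) (use C' that dj in blast)+
    qed
    have s2: "splits_at Go Y b c" unfolding splits_at_def
    proof
      assume "\<exists>C'\<in>Go. C' \<subset> Y \<and> b \<in> C' \<and> c \<in> C'"
      then obtain C' where C': "C' \<in> Go" "C' \<subset> Y" "b \<in> C'" "c \<in> C'" by blast
      have "C' = Y \<or> C' = A \<union> B \<or> C' \<subseteq> A \<or> C' \<subseteq> B \<or> C' \<subseteq> C" using subO C' by blast
      then show False by (rule excl5[where x=b and y=c]) (use C' that dj in blast)+
    qed
    have bc: "b \<in> Y" "c \<in> Y" using Y that by auto
    have q1: "tree_dist X G lg p q \<le> tree_dist X G lg b c" by (rule Qtree[OF eG inG(4) bc that(3,4) s1])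
    have q2: "tree_dist X Go lo p q \<le> tree_dist X Go lo b c" by (rule Qtree[OF eO inO(4) bc that(3,4) s2])
    have mem: "p \<in> X" "q \<in> X" "b \<in> X" "c \<in> X" using that bc YX by auto
    have bnc: "b \<noteq> c" using that dj by blast
    show ?thesis by (rule dle[OF mem False bnc q1 q2])
  qed
  have YBA: "d p q \<le> d b a" if "b \<in> B" "a \<in> A" "p \<in> Y" "q \<in> Y" for b a p q
  proof -
    obtain c0 where c0: "c0 \<in> C" using ne by blast
    have i1: "d p q \<le> d b c0" using YBC that c0 by blast
    have bX: "b \<in> X" "c0 \<in> X" "a \<in> X" using that c0 Y YX by auto
    have i2: "d b c0 \<le> max (d b a) (d a c0)"
      unfolding d_def by (rule ultra[OF eH bX(1) bX(2) bX(3)])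
    have i3: "d a c0 \<le> d a b" using cond that c0 unfolding d_def by blast
    have i4: "d a b = d b a" by (rule dsym)
    show ?thesis using i1 i2 i3 i4 by linarith
  qed
  have Q: "d p q \<le> d x y"
    if K: "K \<in> G" and pts: "x \<in> K" "y \<in> K" "p \<in> K" "q \<in> K" and sp: "splits_at G K x y" for K x y p q
  proof (cases "p = q")
    case True then show ?thesis using d0 dnn by simp
  next
    case pq: False
    have KX: "K \<subseteq> X" using hier_sub[OF hG K] .
    have xy: "x \<noteq> y"
    proof
      assume "x = y"
      have "{x} \<in> G" using hier_sing[OF hG] KX pts by blast
      then have "\<not> {x} \<subset> K" using sp \<open>x = y\<close> unfolding splits_at_def by blast
      then have "K = {x}" using pts by blast
      then show False using pts pq by blast
    qed
    consider (KY) "K = Y" | (KAC) "K = A \<union> C" | (Koth) "K \<noteq> Y" "K \<noteq> A \<union> C" by blast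
    then show ?thesis
    proof cases
      case KY
      have B1: "B \<subset> Y" using Y ne dj by blast
      have B2: "A \<union> C \<subset> Y" using Y ne dj by blast
      have n1: "\<not> (x \<in> B \<and> y \<in> B)" using sp B1 inG(2) unfolding splits_at_def KY by blast
      have n2: "\<not> (x \<in> A \<union> C \<and> y \<in> A \<union> C)" using sp B2 inG(5) unfolding splits_at_def KY by blast
      have "x \<in> A \<union> B \<union> C" "y \<in> A \<union> B \<union> C" using pts KY Y by auto
      then have "(x \<in> B \<and> y \<in> A \<union> C) \<or> (y \<in> B \<and> x \<in> A \<union> C)" using n1 n2 by blast
      then show ?thesis
      proof
        assume a: "x \<in> B \<and> y \<in> A \<union> C"
        have pq: "p \<in> Y" "q \<in> Y" using pts KY by auto
        show ?thesis
        proof (cases "y \<in> A")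
          case True then show ?thesis using YBA[of x y p q] a pq by blast
        next
          case False then show ?thesis using YBC[of x y p q] a pq by blast
        qed
      next
        assume a: "y \<in> B \<and> x \<in> A \<union> C"
        have pq: "p \<in> Y" "q \<in> Y" using pts KY by auto
        have "d p q \<le> d y x"
        proof (cases "x \<in> A")
          case True then show ?thesis using YBA[of y x p q] a pq by blast
        next
          case False then show ?thesis using YBC[of y x p q] a pq by blast
        qed
        then show ?thesis using dsym by simp
      qed
    next
      case KAC
      have A1: "A \<subset> A \<union> C" using ne dj by blast
      have C1: "C \<subset> A \<union> C" using ne dj by blast
      have nb: "\<not> (x \<in> A \<and> y \<in> A)" using sp A1 inG(1) KAC unfolding splits_at_def by blast
      have nc: "\<not> (x \<in> C \<and> y \<in> C)" using sp C1 inG(3) KAC unfolding splits_at_def by blast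
      have s2: "splits_at Go Y x y" unfolding splits_at_def
      proof
        assume "\<exists>C'\<in>Go. C' \<subset> Y \<and> x \<in> C' \<and> y \<in> C'"
        then obtain C' where C': "C' \<in> Go" "C' \<subset> Y" "x \<in> C'" "y \<in> C'" by blast
        have dis: "C' = Y \<or> C' = A \<union> B \<or> C' \<subseteq> A \<or> C' \<subseteq> B \<or> C' \<subseteq> C" using subO C' by blast
        have xy': "x \<in> A \<union> C" "y \<in> A \<union> C" using pts KAC by auto
        show False by (rule excl5[where x=x and y=y, OF dis]) (use C' nb nc dj xy' in blast)+
      qed
      have inY: "x \<in> Y" "y \<in> Y" "p \<in> Y" "q \<in> Y" using pts KAC Y by auto
      have q1: "tree_dist X G lg p q \<le> tree_dist X G lg x y" by (rule Qtree[OF eG K pts sp])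
      have q2: "tree_dist X Go lo p q \<le> tree_dist X Go lo x y" by (rule Qtree[OF eO inO(4) inY s2])
      have mem: "p \<in> X" "q \<in> X" "x \<in> X" "y \<in> X" using pts KX by auto
      show ?thesis by (rule dle[OF mem pq xy q1 q2])
    next
      case Koth
      have KO: "K \<in> Go" using strG K Koth by blast
      have s2: "splits_at Go K x y" unfolding splits_at_def
      proof
        assume "\<exists>C'\<in>Go. C' \<subset> K \<and> x \<in> C' \<and> y \<in> C'"
        then obtain C' where C': "C' \<in> Go" "C' \<subset> K" "x \<in> C'" "y \<in> C'" by blast
        show False
        proof (cases "C' \<in> G")
          case True then show False using sp C' unfolding splits_at_def by blast
        next
          case False
          then have C'AB: "C' = A \<union> B" using strO C' by blast
          have nest: "K \<subseteq> Y \<or> Y \<subseteq> K \<or> K \<inter> Y = {}" using hier_nest[OF hG K inG(4)] .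
          have ABK: "A \<union> B \<subseteq> K" using C'(2) C'AB by blast
          have nKY: "\<not> K \<subseteq> Y"
          proof
            assume "K \<subseteq> Y"
            then have dis: "K = Y \<or> K = A \<union> C \<or> K \<subseteq> A \<or> K \<subseteq> B \<or> K \<subseteq> C" using subG K by blast
            show False by (rule exclK[OF dis Koth ABK ne(1,2) dj])
          qed
          have ABY: "A \<union> B \<subseteq> Y" using Y by blast
          have "K \<inter> Y \<noteq> {}" using ABK ABY ne(1) by blast
          then have YK: "Y \<subseteq> K" using nest nKY by blast
          have "Y \<noteq> K" using Koth(1) by simp
          then have YK': "Y \<subset> K" using YK by (rule psubsetI[rotated])
          have "x \<in> Y" "y \<in> Y" using C'(3,4) C'AB ABY by auto
          then show False using sp inG(4) YK' unfolding splits_at_def by blast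
        qed
      qed
      have q1: "tree_dist X G lg p q \<le> tree_dist X G lg x y" by (rule Qtree[OF eG K pts sp])
      have q2: "tree_dist X Go lo p q \<le> tree_dist X Go lo x y" by (rule Qtree[OF eO KO pts s2])
      have mem: "p \<in> X" "q \<in> X" "x \<in> X" "y \<in> X" using pts KX by auto
      show ?thesis by (rule dle[OF mem pq xy q1 q2])
    qed
  qed
  obtain l' where l': "equidistant_tree X G l'" "\<forall>x\<in>X. \<forall>y\<in>X. x \<noteq> y \<longrightarrow> tree_dist X G l' x y = d x y"
  proof -
    have "\<exists>l'. equidistant_tree X G l' \<and> (\<forall>x\<in>X. \<forall>y\<in>X. x \<noteq> y \<longrightarrow> tree_dist X G l' x y = d x y)"
    proof (rule realize[OF hG])
      show "\<And>x. d x x = 0" by (rule d0)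
      show "\<And>K x y p q. K \<in> G \<Longrightarrow> x \<in> K \<Longrightarrow> y \<in> K \<Longrightarrow> p \<in> K \<Longrightarrow> q \<in> K \<Longrightarrow>
              splits_at G K x y \<Longrightarrow> d p q \<le> d x y" by (rule Q)
    qed
    then show ?thesis using that by blast
  qed
  have su: "same_ultrametric X H l G l'" unfolding same_ultrametric_def
  proof (intro ballI impI)
    fix x y assume xy: "x \<in> X" "y \<in> X" "x \<noteq> y"
    then have "tree_dist X G l' x y = d x y" using l'(2) by blast
    then show "tree_dist X H l x y = tree_dist X G l' x y" unfolding d_def by simp
  qed
  then show ?thesis using l'(1) by blast
qed



lemma core:
  assumes e1: "equidistant_tree X H1 l1" and e2: "equidistant_tree X H2 l2" and eH: "equidistant_tree X H l"
  and dmax: "\<forall>x\<in>X. \<forall>y\<in>X. x \<noteq> y \<longrightarrow> tree_dist X H l x y = max (a + tree_dist X H1 l1 x y) (b + tree_dist X H2 l2 x y)"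
  and ne: "A \<noteq> {}" "B \<noteq> {}" "C \<noteq> {}" and dj: "A \<inter> B = {}" "A \<inter> C = {}" "B \<inter> C = {}"
  and Y: "Y = A \<union> B \<union> C"
  and in1: "A \<in> H1" "B \<in> H1" "C \<in> H1" "Y \<in> H1" "A \<union> C \<in> H1"
  and in2: "A \<in> H2" "B \<in> H2" "C \<in> H2" "Y \<in> H2" "A \<union> B \<in> H2"
  and str1: "\<forall>K\<in>H1. K \<in> H2 \<or> K = A \<union> C" and str2: "\<forall>K\<in>H2. K \<in> H1 \<or> K = A \<union> B"
  and sub1: "\<forall>K\<in>H1. K \<subseteq> Y \<longrightarrow> K = Y \<or> K = A \<union> C \<or> K \<subseteq> A \<or> K \<subseteq> B \<or> K \<subseteq> C"
  and sub2: "\<forall>K\<in>H2. K \<subseteq> Y \<longrightarrow> K = Y \<or> K = A \<union> B \<or> K \<subseteq> A \<or> K \<subseteq> B \<or> K \<subseteq> C"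
  shows "(\<exists>l'. equidistant_tree X H1 l' \<and> same_ultrametric X H l H1 l') \<or>
         (\<exists>l'. equidistant_tree X H2 l' \<and> same_ultrametric X H l H2 l')"
proof -
  define d where "d = tree_dist X H l"
  have h1: "hierarchy X H1" using e1 unfolding equidistant_tree_def by blast
  have dc: "d x y = d x' y'"
    if PR: "P \<in> H1" "P \<in> H2" "R \<in> H1" "R \<in> H2" "P \<inter> R = {}" and pts: "x \<in> P" "x' \<in> P" "y \<in> R" "y' \<in> R"
    for P R x y x' y'
  proof -
    have mem: "x \<in> X" "x' \<in> X" "y \<in> X" "y' \<in> X" using hier_sub[OF h1] PR pts by blast+
    have nx: "x \<noteq> y" "x' \<noteq> y'" using PR pts by blast+
    have m1: "d x y = max (a + tree_dist X H1 l1 x y) (b + tree_dist X H2 l2 x y)"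
      unfolding d_def using dmax mem nx by blast
    have m2: "d x' y' = max (a + tree_dist X H1 l1 x' y') (b + tree_dist X H2 l2 x' y')"
      unfolding d_def using dmax mem nx by blast
    have t1: "tree_dist X H1 l1 x y = tree_dist X H1 l1 x' y'" by (rule td_const[OF e1 PR(1,3,5) pts])
    have t2: "tree_dist X H2 l2 x y = tree_dist X H2 l2 x' y'" by (rule td_const[OF e2 PR(2,4,5) pts])
    show ?thesis unfolding m1 m2 t1 t2 ..
  qed
  obtain a0 b0 c0 where abc: "a0 \<in> A" "b0 \<in> B" "c0 \<in> C" using ne by blast
  show ?thesis
  proof (cases "d a0 c0 \<le> d a0 b0")
    case True
    have cond: "\<forall>x\<in>A. \<forall>y\<in>B. \<forall>z\<in>C. tree_dist X H l x z \<le> tree_dist X H l x y"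
    proof (intro ballI)
      fix x y z assume xyz: "x \<in> A" "y \<in> B" "z \<in> C"
      have "d x z = d a0 c0" by (rule dc[OF in1(1) in2(1) in1(3) in2(3) dj(2) xyz(1) abc(1) xyz(3) abc(3)])
      moreover have "d x y = d a0 b0" by (rule dc[OF in1(1) in2(1) in1(2) in2(2) dj(1) xyz(1) abc(1) xyz(2) abc(2)])
      ultimately show "tree_dist X H l x z \<le> tree_dist X H l x y" using True unfolding d_def by simp
    qed
    show ?thesis
      using side[OF e1 e2 eH dmax ne dj Y in1 in2 str1 str2 sub1 sub2 cond] by blast
  next
    case False
    have cond: "\<forall>x\<in>A. \<forall>y\<in>C. \<forall>z\<in>B. tree_dist X H l x z \<le> tree_dist X H l x y"
    proof (intro ballI)
      fix x y z assume xyz: "x \<in> A" "y \<in> C" "z \<in> B"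
      have "d x y = d a0 c0" by (rule dc[OF in1(1) in2(1) in1(3) in2(3) dj(2) xyz(1) abc(1) xyz(2) abc(3)])
      moreover have "d x z = d a0 b0" by (rule dc[OF in1(1) in2(1) in1(2) in2(2) dj(1) xyz(1) abc(1) xyz(3) abc(2)])
      ultimately show "tree_dist X H l x z \<le> tree_dist X H l x y" using False unfolding d_def by simp
    qed
    have dmax': "\<forall>x\<in>X. \<forall>y\<in>X. x \<noteq> y \<longrightarrow> tree_dist X H l x y = max (b + tree_dist X H2 l2 x y) (a + tree_dist X H1 l1 x y)"
      using dmax by (simp add: max.commute)
    have dj': "A \<inter> C = {}" "A \<inter> B = {}" "C \<inter> B = {}" using dj by blast+
    have Y': "Y = A \<union> C \<union> B" using Y by blast
    have sub2': "\<forall>K\<in>H2. K \<subseteq> Y \<longrightarrow> K = Y \<or> K = A \<union> B \<or> K \<subseteq> A \<or> K \<subseteq> C \<or> K \<subseteq> B"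
      using sub2 by blast
    have sub1': "\<forall>K\<in>H1. K \<subseteq> Y \<longrightarrow> K = Y \<or> K = A \<union> C \<or> K \<subseteq> A \<or> K \<subseteq> C \<or> K \<subseteq> B"
      using sub1 by blast
    show ?thesis
      using side[OF e2 e1 eH dmax' ne(1,3,2) dj' Y' in2(1,3,2,4,5) in1(1,3,2,4,5) str2 str1 sub2' sub1' cond]
      by blast
  qed
qed



theorem theorem6:
  fixes X :: "'a set" and H1 H2 :: "'a set set" and l1 l2 :: "'a set \<Rightarrow> real"
  assumes "equidistant_tree X H1 l1"
    and "equidistant_tree X H2 l2"
    and "nni X H1 H2"
  shows "\<forall>H l. on_tropical_segment X H1 l1 H2 l2 H l \<longrightarrow>
           (\<exists>l'. equidistant_tree X H1 l' \<and> same_ultrametric X H l H1 l') \<or>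
           (\<exists>l'. equidistant_tree X H2 l' \<and> same_ultrametric X H l H2 l')"
proof (intro allI impI)
  fix H l assume seg: "on_tropical_segment X H1 l1 H2 l2 H l"
  have eH: "equidistant_tree X H l" using seg unfolding on_tropical_segment_def by blast
  obtain a b where dmax: "\<forall>x\<in>X. \<forall>y\<in>X. x \<noteq> y \<longrightarrow>
        tree_dist X H l x y = max (a + tree_dist X H1 l1 x y) (b + tree_dist X H2 l2 x y)"
    using seg unfolding on_tropical_segment_def by blast
  obtain X1 X2 X3 where P: "X1 \<noteq> {} \<and> X2 \<noteq> {} \<and> X3 \<noteq> {} \<and>
     X1 \<inter> X2 = {} \<and> X1 \<inter> X3 = {} \<and> X2 \<inter> X3 = {} \<and>
     (let Y = X1 \<union> X2 \<union> X3 in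
       Y \<in> H1 \<and> Y \<in> H2 \<and> X1 \<in> H1 \<and> X1 \<in> H2 \<and> X2 \<in> H1 \<and> X2 \<in> H2 \<and>
       X3 \<in> H1 \<and> X3 \<in> H2 \<and>
       (\<forall>i\<in>{X1, X2, X3}. {C\<in>H1. C \<subseteq> i} = {C\<in>H2. C \<subseteq> i}) \<and>
       {C\<in>H1. \<not> C \<subseteq> Y} = {C\<in>H2. \<not> C \<subseteq> Y} \<and>
       {C\<in>H1. C \<subseteq> Y} = {Y, X1 \<union> X3} \<union> {C\<in>H1. C \<subseteq> X1 \<or> C \<subseteq> X2 \<or> C \<subseteq> X3} \<and>
       ({C\<in>H2. C \<subseteq> Y} = {Y, X1 \<union> X2} \<union> {C\<in>H2. C \<subseteq> X1 \<or> C \<subseteq> X2 \<or> C \<subseteq> X3} \<or>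
        {C\<in>H2. C \<subseteq> Y} = {Y, X2 \<union> X3} \<union> {C\<in>H2. C \<subseteq> X1 \<or> C \<subseteq> X2 \<or> C \<subseteq> X3}))"
    using assms(3) unfolding nni_def by (elim exE) (rule that)
  note P' = P[unfolded Let_def]
  from P' obtain ne1: "X1 \<noteq> {}" and ne2: "X2 \<noteq> {}" and ne3: "X3 \<noteq> {}"
    and dj1: "X1 \<inter> X2 = {}" and dj2: "X1 \<inter> X3 = {}" and dj3: "X2 \<inter> X3 = {}"
    and r01: "X1 \<union> X2 \<union> X3 \<in> H1" and r02: "X1 \<union> X2 \<union> X3 \<in> H2" and r03: "X1 \<in> H1"
    and r04: "X1 \<in> H2" and r05: "X2 \<in> H1" and r06: "X2 \<in> H2" and r07: "X3 \<in> H1" and r08: "X3 \<in> H2"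
    and E: "\<forall>i\<in>{X1, X2, X3}. {C\<in>H1. C \<subseteq> i} = {C\<in>H2. C \<subseteq> i}"
    and Eout0: "{C\<in>H1. \<not> C \<subseteq> X1 \<union> X2 \<union> X3} = {C\<in>H2. \<not> C \<subseteq> X1 \<union> X2 \<union> X3}"
    and S10: "{C\<in>H1. C \<subseteq> X1 \<union> X2 \<union> X3} = {X1 \<union> X2 \<union> X3, X1 \<union> X3} \<union> {C\<in>H1. C \<subseteq> X1 \<or> C \<subseteq> X2 \<or> C \<subseteq> X3}"
    and S20: "{C\<in>H2. C \<subseteq> X1 \<union> X2 \<union> X3} = {X1 \<union> X2 \<union> X3, X1 \<union> X2} \<union> {C\<in>H2. C \<subseteq> X1 \<or> C \<subseteq> X2 \<or> C \<subseteq> X3} \<or>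
        {C\<in>H2. C \<subseteq> X1 \<union> X2 \<union> X3} = {X1 \<union> X2 \<union> X3, X2 \<union> X3} \<union> {C\<in>H2. C \<subseteq> X1 \<or> C \<subseteq> X2 \<or> C \<subseteq> X3}"
    apply (elim conjE)
    apply (rule that)
                     apply assumption+
    done
  note ne = ne1 ne2 ne3
  note dj = dj1 dj2 dj3
  note r0 = r01 r02 r03 r04 r05 r06 r07 r08
  define Y where "Y = X1 \<union> X2 \<union> X3"
  note r = r0[folded Y_def]
  note Eout = Eout0[folded Y_def]
  note S1 = S10[folded Y_def]
  note S2 = S20[folded Y_def]
  have E1: "{C\<in>H1. C \<subseteq> X1} = {C\<in>H2. C \<subseteq> X1}" using E by simp
  have E2: "{C\<in>H1. C \<subseteq> X2} = {C\<in>H2. C \<subseteq> X2}" using E by simp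
  have E3: "{C\<in>H1. C \<subseteq> X3} = {C\<in>H2. C \<subseteq> X3}" using E by simp
  have inpart: "K \<in> H2" if KH: "K \<in> H1" and KD: "K \<subseteq> X1 \<or> K \<subseteq> X2 \<or> K \<subseteq> X3" for K
  proof -
    consider "K \<subseteq> X1" | "K \<subseteq> X2" | "K \<subseteq> X3" using KD by blast
    then show ?thesis
    proof cases
      case 1 then have "K \<in> {C\<in>H1. C \<subseteq> X1}" using KH by blast
      then show ?thesis unfolding E1 by blast
    next
      case 2 then have "K \<in> {C\<in>H1. C \<subseteq> X2}" using KH by blast
      then show ?thesis unfolding E2 by blast
    next
      case 3 then have "K \<in> {C\<in>H1. C \<subseteq> X3}" using KH by blast
      then show ?thesis unfolding E3 by blast
    qed
  qed
  have inpart2: "K \<in> H1" if KH: "K \<in> H2" and KD: "K \<subseteq> X1 \<or> K \<subseteq> X2 \<or> K \<subseteq> X3" for K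
  proof -
    consider "K \<subseteq> X1" | "K \<subseteq> X2" | "K \<subseteq> X3" using KD by blast
    then show ?thesis
    proof cases
      case 1 then have "K \<in> {C\<in>H2. C \<subseteq> X1}" using KH by blast
      then show ?thesis unfolding E1[symmetric] by blast
    next
      case 2 then have "K \<in> {C\<in>H2. C \<subseteq> X2}" using KH by blast
      then show ?thesis unfolding E2[symmetric] by blast
    next
      case 3 then have "K \<in> {C\<in>H2. C \<subseteq> X3}" using KH by blast
      then show ?thesis unfolding E3[symmetric] by blast
    qed
  qed
  have out1: "K \<in> H2" if "K \<in> H1" "\<not> K \<subseteq> Y" for K
  proof -
    have "K \<in> {C\<in>H1. \<not> C \<subseteq> Y}" using that by blast
    then show ?thesis unfolding Eout by blast
  qed
  have out2: "K \<in> H1" if "K \<in> H2" "\<not> K \<subseteq> Y" for K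
  proof -
    have "K \<in> {C\<in>H2. \<not> C \<subseteq> Y}" using that by blast
    then show ?thesis unfolding Eout[symmetric] by blast
  qed
  have sub1: "K = Y \<or> K = X1 \<union> X3 \<or> K \<subseteq> X1 \<or> K \<subseteq> X2 \<or> K \<subseteq> X3" if "K \<in> H1" "K \<subseteq> Y" for K
  proof -
    have "K \<in> {C\<in>H1. C \<subseteq> Y}" using that by blast
    then show ?thesis unfolding S1 by blast
  qed
  have X13: "X1 \<union> X3 \<in> H1"
  proof -
    have "X1 \<union> X3 \<in> {C\<in>H1. C \<subseteq> Y}" unfolding S1 by blast
    then show ?thesis by blast
  qed
  have str1: "K \<in> H2 \<or> K = X1 \<union> X3" if "K \<in> H1" for K
  proof (cases "K \<subseteq> Y")
    case True
    then have "K = Y \<or> K = X1 \<union> X3 \<or> K \<subseteq> X1 \<or> K \<subseteq> X2 \<or> K \<subseteq> X3" using sub1 that by blast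
    then show ?thesis using r(2) inpart that by blast
  next
    case False then show ?thesis using out1 that by blast
  qed
  have e1: "equidistant_tree X H1 l1" and e2: "equidistant_tree X H2 l2" using assms by blast+
  from S2 show "(\<exists>l'. equidistant_tree X H1 l' \<and> same_ultrametric X H l H1 l') \<or>
         (\<exists>l'. equidistant_tree X H2 l' \<and> same_ultrametric X H l H2 l')"
  proof
    assume S2a: "{C\<in>H2. C \<subseteq> Y} = {Y, X1 \<union> X2} \<union> {C\<in>H2. C \<subseteq> X1 \<or> C \<subseteq> X2 \<or> C \<subseteq> X3}"
    have sub2: "K = Y \<or> K = X1 \<union> X2 \<or> K \<subseteq> X1 \<or> K \<subseteq> X2 \<or> K \<subseteq> X3" if "K \<in> H2" "K \<subseteq> Y" for K
    proof -
      have "K \<in> {C\<in>H2. C \<subseteq> Y}" using that by blast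
      then show ?thesis unfolding S2a by blast
    qed
    have X12: "X1 \<union> X2 \<in> H2"
    proof -
      have "X1 \<union> X2 \<in> {C\<in>H2. C \<subseteq> Y}" unfolding S2a by blast
      then show ?thesis by blast
    qed
    have str2: "K \<in> H1 \<or> K = X1 \<union> X2" if "K \<in> H2" for K
    proof (cases "K \<subseteq> Y")
      case True
      then have "K = Y \<or> K = X1 \<union> X2 \<or> K \<subseteq> X1 \<or> K \<subseteq> X2 \<or> K \<subseteq> X3" using sub2 that by blast
      then show ?thesis using r(1) inpart2 that by blast
    next
      case False then show ?thesis using out2 that by blast
    qed
    show ?thesis
    proof (rule core[OF e1 e2 eH dmax ne dj Y_def r(3,5,7,1) X13 r(4,6,8,2) X12])
      show "\<forall>K\<in>H1. K \<in> H2 \<or> K = X1 \<union> X3" using str1 by blast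
      show "\<forall>K\<in>H2. K \<in> H1 \<or> K = X1 \<union> X2" using str2 by blast
      show "\<forall>K\<in>H1. K \<subseteq> Y \<longrightarrow> K = Y \<or> K = X1 \<union> X3 \<or> K \<subseteq> X1 \<or> K \<subseteq> X2 \<or> K \<subseteq> X3" using sub1 by blast
      show "\<forall>K\<in>H2. K \<subseteq> Y \<longrightarrow> K = Y \<or> K = X1 \<union> X2 \<or> K \<subseteq> X1 \<or> K \<subseteq> X2 \<or> K \<subseteq> X3" using sub2 by blast
    qed
  next
    assume S2b: "{C\<in>H2. C \<subseteq> Y} = {Y, X2 \<union> X3} \<union> {C\<in>H2. C \<subseteq> X1 \<or> C \<subseteq> X2 \<or> C \<subseteq> X3}"
    have sub2: "K = Y \<or> K = X2 \<union> X3 \<or> K \<subseteq> X1 \<or> K \<subseteq> X2 \<or> K \<subseteq> X3" if "K \<in> H2" "K \<subseteq> Y" for K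
    proof -
      have "K \<in> {C\<in>H2. C \<subseteq> Y}" using that by blast
      then show ?thesis unfolding S2b by blast
    qed
    have X23: "X2 \<union> X3 \<in> H2"
    proof -
      have "X2 \<union> X3 \<in> {C\<in>H2. C \<subseteq> Y}" unfolding S2b by blast
      then show ?thesis by blast
    qed
    have str2: "K \<in> H1 \<or> K = X2 \<union> X3" if "K \<in> H2" for K
    proof (cases "K \<subseteq> Y")
      case True
      then have "K = Y \<or> K = X2 \<union> X3 \<or> K \<subseteq> X1 \<or> K \<subseteq> X2 \<or> K \<subseteq> X3" using sub2 that by blast
      then show ?thesis using r(1) inpart2 that by blast
    next
      case False then show ?thesis using out2 that by blast
    qed
    have c31: "X3 \<union> X1 = X1 \<union> X3" and c32: "X3 \<union> X2 = X2 \<union> X3" by blast+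
    have Y': "Y = X3 \<union> X2 \<union> X1" unfolding Y_def by blast
    have dj': "X3 \<inter> X2 = {}" "X3 \<inter> X1 = {}" "X2 \<inter> X1 = {}" using dj by blast+
    show ?thesis
    proof (rule core[OF e1 e2 eH dmax ne(3,2,1) dj' Y' r(7,5,3,1)])
      show "X3 \<union> X1 \<in> H1" unfolding c31 by (rule X13)
      show "X3 \<union> X2 \<in> H2" unfolding c32 by (rule X23)
      show "X3 \<in> H2" "X2 \<in> H2" "X1 \<in> H2" "Y \<in> H2" using r by blast+
      show "\<forall>K\<in>H1. K \<in> H2 \<or> K = X3 \<union> X1" using str1 c31 by simp
      show "\<forall>K\<in>H2. K \<in> H1 \<or> K = X3 \<union> X2" using str2 c32 by simp
      show "\<forall>K\<in>H1. K \<subseteq> Y \<longrightarrow> K = Y \<or> K = X3 \<union> X1 \<or> K \<subseteq> X3 \<or> K \<subseteq> X2 \<or> K \<subseteq> X1"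
        using sub1 c31 by auto
      show "\<forall>K\<in>H2. K \<subseteq> Y \<longrightarrow> K = Y \<or> K = X3 \<union> X2 \<or> K \<subseteq> X3 \<or> K \<subseteq> X2 \<or> K \<subseteq> X1"
        using sub2 c32 by auto
    qed
  qed
qed

end
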